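(* For every rewritable 1qfa $M$ with quantum advice $\Psi=\{|\phi_n\rangle\}_{n\in\mathbb N}$, there exist another rewritable 1qfa $N$ (with the same input alphabet and with state set, accepting set and advice-track alphabet of its own) and quantum advice $\Psi'=\{|\phi'_n\rangle\}_{n\in\mathbb N}$ for $N$ such that (i) $N$ performs a measurement only once, just after scanning the entire input, i.e., its acceptance probability on $x=x_1\cdots x_n$ is $\|P_{acc}U^{(n)}_{x_n}\cdots U^{(1)}_{x_1}|q_0\rangle|\phi'_n\rangle\|^2$ (with $U^{(i)}_\sigma$, $P_{acc}$, $q_0$ those of $N$), and (ii) for every input $x$ this acceptance probability of $N$ with $\Psi'$ equals the acceptance probability $p_{acc}(x,\phi_n)$ of $M$ with $\Psi$.
   Context: Rewritable 1qfa: finite state set $Q$ with $q_0\in Q$ and disjoint $Q_{acc},Q_{rej}\subseteq Q$ ($Q_{non}$ the rest), input alphabet $\Sigma$, finite advice-track alphabet $\Gamma$, and for each $\sigma\in\Sigma$, $i\ge1$ a unitary $V^{(i)}_\sigma$ on $\mathrm{span}\{|q\rangle:q\in Q\}\otimes\mathrm{span}\{|\tau\rangle:\tau\in\Gamma\}$. For $n\ge1$, on $E_n=\mathrm{span}\{|q\rangle|y\rangle:q\in Q,y\in\Gamma^n\}$ let $U^{(i)}_\sigma$ ($1\le i\le n$) act as $V^{(i)}_\sigma$ on the state register and the $i$-th advice symbol (which may be changed) and as identity on other advice symbols; the input track is read-only. $P_{acc},P_{rej},P_{non}$ are projections on the state register; $T^{(i)}_\sigma=P_{non}U^{(i)}_\sigma$.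 Quantum advice: unit vectors $|\phi_n\rangle\in\mathrm{span}\{|y\rangle:y\in\Gamma^n\}$. For $x=x_1\cdots x_n\in\Sigma^n$ ($n\ge1$), the (measure-many) acceptance probability is $p_{acc}(x,\phi_n)=\sum_{i=1}^n\|P_{acc}U^{(i)}_{x_i}T^{(i-1)}_{x_{i-1}}\cdots T^{(1)}_{x_1}|q_0\rangle|\phi_n\rangle\|^2$. *)

theory Defs
  imports Complex_Main
begin

text \<open>V \<sigma> i is a matrix on Q \<times> \<Gamma>, entry V \<sigma> i (out) (in).
  Vectors of E_n are functions 's \<times> 'g list \<Rightarrow> complex, of which only the values on
  Q \<times> \<Gamma>^n matter.\<close>

definition words :: "'g set \<Rightarrow> nat \<Rightarrow> 'g list set" where
  "words \<Gamma> n = {y. set y \<subseteq> \<Gamma> \<and> length y = n}"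

definition unitary_on :: "'b set \<Rightarrow> ('b \<Rightarrow> 'b \<Rightarrow> complex) \<Rightarrow> bool" where
  "unitary_on B W \<longleftrightarrow>
     (\<forall>a\<in>B. \<forall>b\<in>B. (\<Sum>k\<in>B. cnj (W k a) * W k b) = (if a = b then 1 else 0))"

definition is_rqfa ::
  "'a set \<Rightarrow> 's set \<Rightarrow> 's \<Rightarrow> 's set \<Rightarrow> 's set \<Rightarrow> 'g set
     \<Rightarrow> ('a \<Rightarrow> nat \<Rightarrow> ('s \<times> 'g) \<Rightarrow> ('s \<times> 'g) \<Rightarrow> complex) \<Rightarrow> bool" where
  "is_rqfa \<Sigma> Q q0 Qa Qr \<Gamma> V \<longleftrightarrow>
     finite \<Sigma> \<and> finite Q \<and> q0 \<in> Q \<and> Qa \<subseteq> Q \<and> Qr \<subseteq> Q \<and> Qa \<inter> Qr = {} \<and> finite \<Gamma> \<and>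
     (\<forall>\<sigma>\<in>\<Sigma>. \<forall>i\<ge>1. unitary_on (Q \<times> \<Gamma>) (V \<sigma> i))"

text \<open>U^(i): acts as W on the state register and the i-th advice symbol.\<close>
definition Uop :: "'s set \<Rightarrow> 'g set \<Rightarrow> ('s \<times> 'g \<Rightarrow> 's \<times> 'g \<Rightarrow> complex) \<Rightarrow> nat
     \<Rightarrow> ('s \<times> 'g list \<Rightarrow> complex) \<Rightarrow> ('s \<times> 'g list \<Rightarrow> complex)" where
  "Uop Q \<Gamma> W i \<psi> = (\<lambda>(q', y').
     if q' \<in> Q \<and> set y' \<subseteq> \<Gamma> \<and> 1 \<le> i \<and> i \<le> length y'
     then (\<Sum>(q, \<tau>)\<in>Q \<times> \<Gamma>. W (q', y' ! (i - 1)) (q, \<tau>) * \<psi> (q, y'[i - 1 := \<tau>]))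
     else 0)"

definition proj :: "'s set \<Rightarrow> ('s \<times> 'g list \<Rightarrow> complex) \<Rightarrow> ('s \<times> 'g list \<Rightarrow> complex)" where
  "proj S \<psi> = (\<lambda>(q, y). if q \<in> S then \<psi> (q, y) else 0)"

definition sqnorm :: "'s set \<Rightarrow> 'g set \<Rightarrow> nat \<Rightarrow> ('s \<times> 'g list \<Rightarrow> complex) \<Rightarrow> real" where
  "sqnorm Q \<Gamma> n \<psi> = (\<Sum>q\<in>Q. \<Sum>y\<in>words \<Gamma> n. (cmod (\<psi> (q, y)))^2)"

definition init :: "'s \<Rightarrow> ('g list \<Rightarrow> complex) \<Rightarrow> ('s \<times> 'g list \<Rightarrow> complex)" where
  "init q0 \<phi> = (\<lambda>(q, y). if q = q0 then \<phi> y else 0)"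

definition is_advice :: "'g set \<Rightarrow> (nat \<Rightarrow> 'g list \<Rightarrow> complex) \<Rightarrow> bool" where
  "is_advice \<Gamma> \<phi> \<longleftrightarrow> (\<forall>n\<ge>1. (\<Sum>y\<in>words \<Gamma> n. (cmod (\<phi> n y))^2) = 1)"

text \<open>runT ... x k \<psi> = T^(k)_{x_k} ... T^(1)_{x_1} \<psi>, with T = P_non U.\<close>
fun runT :: "'s set \<Rightarrow> 's set \<Rightarrow> 'g set \<Rightarrow> ('a \<Rightarrow> nat \<Rightarrow> ('s \<times> 'g) \<Rightarrow> ('s \<times> 'g) \<Rightarrow> complex)
     \<Rightarrow> 'a list \<Rightarrow> nat \<Rightarrow> ('s \<times> 'g list \<Rightarrow> complex) \<Rightarrow> ('s \<times> 'g list \<Rightarrow> complex)" where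
  "runT Q Qn \<Gamma> V x 0 \<psi> = \<psi>"
| "runT Q Qn \<Gamma> V x (Suc k) \<psi> =
     proj Qn (Uop Q \<Gamma> (V (x ! k) (Suc k)) (Suc k) (runT Q Qn \<Gamma> V x k \<psi>))"

fun runU :: "'s set \<Rightarrow> 'g set \<Rightarrow> ('a \<Rightarrow> nat \<Rightarrow> ('s \<times> 'g) \<Rightarrow> ('s \<times> 'g) \<Rightarrow> complex)
     \<Rightarrow> 'a list \<Rightarrow> nat \<Rightarrow> ('s \<times> 'g list \<Rightarrow> complex) \<Rightarrow> ('s \<times> 'g list \<Rightarrow> complex)" where
  "runU Q \<Gamma> V x 0 \<psi> = \<psi>"
| "runU Q \<Gamma> V x (Suc k) \<psi> = Uop Q \<Gamma> (V (x ! k) (Suc k)) (Suc k) (runU Q \<Gamma> V x k \<psi>)"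

definition p_acc_mm :: "'s set \<Rightarrow> 's \<Rightarrow> 's set \<Rightarrow> 's set \<Rightarrow> 'g set
     \<Rightarrow> ('a \<Rightarrow> nat \<Rightarrow> ('s \<times> 'g) \<Rightarrow> ('s \<times> 'g) \<Rightarrow> complex)
     \<Rightarrow> 'a list \<Rightarrow> (nat \<Rightarrow> 'g list \<Rightarrow> complex) \<Rightarrow> real" where
  "p_acc_mm Q q0 Qa Qr \<Gamma> V x \<phi> =
     (let n = length x; \<psi>0 = init q0 (\<phi> n) in
      \<Sum>i\<in>{1..n}. sqnorm Q \<Gamma> n
        (proj Qa (Uop Q \<Gamma> (V (x ! (i - 1)) i) i (runT Q (Q - Qa - Qr) \<Gamma> V x (i - 1) \<psi>0))))"

definition p_acc_mo :: "'s set \<Rightarrow> 's \<Rightarrow> 's set \<Rightarrow> 'g set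
     \<Rightarrow> ('a \<Rightarrow> nat \<Rightarrow> ('s \<times> 'g) \<Rightarrow> ('s \<times> 'g) \<Rightarrow> complex)
     \<Rightarrow> 'a list \<Rightarrow> (nat \<Rightarrow> 'g list \<Rightarrow> complex) \<Rightarrow> real" where
  "p_acc_mo Q q0 Qa \<Gamma> V x \<phi> =
     (let n = length x in sqnorm Q \<Gamma> n (proj Qa (runU Q \<Gamma> V x n (init q0 (\<phi> n)))))"

end

theory Submission
  imports Defs
begin

section \<open>Renaming\<close>

lemma words_image:
  assumes "inj_on g G" shows "words (g ` G) n = map g ` words G n"
proof
  show "map g ` words G n \<subseteq> words (g ` G) n" by (auto simp: words_def)
      (blast)
  show "words (g ` G) n \<subseteq> map g ` words G n"
  proof
    fix y assume "y \<in> words (g ` G) n"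
    hence y: "set y \<subseteq> g ` G" "length y = n" by (auto simp: words_def)
    let ?z = "map (the_inv_into G g) y"
    have "map g ?z = y" using y(1) assms
      by (auto simp: f_the_inv_into_f intro!: map_idI)
    moreover have "?z \<in> words G n" using y assms
      by (auto simp: words_def the_inv_into_into)
    ultimately show "y \<in> map g ` words G n" by (metis image_eqI)
  qed
qed

lemma inj_on_map_words: "inj_on g G \<Longrightarrow> inj_on (map g) (words G n)"
  by (rule inj_on_mapI) (auto simp: words_def intro: inj_on_subset)

lemma finite_words: "finite G \<Longrightarrow> finite (words G n)"
  unfolding words_def by (rule finite_lists_length_eq)

definition renV :: "('s \<Rightarrow> 't) \<Rightarrow> ('g \<Rightarrow> 'h) \<Rightarrow> 's set \<Rightarrow> 'g set
   \<Rightarrow> ('a \<Rightarrow> nat \<Rightarrow> ('s \<times> 'g) \<Rightarrow> ('s \<times> 'g) \<Rightarrow> complex)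
   \<Rightarrow> ('a \<Rightarrow> nat \<Rightarrow> ('t \<times> 'h) \<Rightarrow> ('t \<times> 'h) \<Rightarrow> complex)" where
  "renV e g Q G V = (\<lambda>\<sigma> i (a, b) (c, d).
     V \<sigma> i (the_inv_into Q e a, the_inv_into G g b) (the_inv_into Q e c, the_inv_into G g d))"

lemma sum_prod_reindex:
  assumes "inj_on e Q" "inj_on g G"
  shows "(\<Sum>k\<in>e ` Q \<times> g ` G. F k) = (\<Sum>(q, \<tau>)\<in>Q \<times> G. F (e q, g \<tau>))"
proof -
  have "e ` Q \<times> g ` G = map_prod e g ` (Q \<times> G)" by (simp add: map_prod_surj_on)
  moreover have "inj_on (map_prod e g) (Q \<times> G)" using assms by (rule map_prod_inj_on)
  ultimately show ?thesis by (simp add: sum.reindex case_prod_beta' comp_def map_prod_def)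
qed

lemma ren_run:
  assumes e: "inj_on e Q" and g: "inj_on g G" and q: "q \<in> Q" and y: "set y \<subseteq> G"
    and q0: "q0 \<in> Q"
  shows "runU (e ` Q) (g ` G) (renV e g Q G V) x k
           (init (e q0) (\<lambda>y. \<phi> (map (the_inv_into G g) y))) (e q, map g y)
         = runU Q G V x k (init q0 \<phi>) (q, y)"
  using q y
proof (induction k arbitrary: q y)
  case 0
  have "map (the_inv_into G g) (map g y) = y" using 0 g
    by (simp add: map_idI subset_iff the_inv_into_f_f)
  moreover have "(e q = e q0) = (q = q0)" using 0 q0 e by (meson inj_on_eq_iff)
  ultimately show ?case by (simp add: init_def)
next
  case (Suc k)
  let ?W3 = "renV e g Q G V (x ! k) (Suc k)"
  let ?P3 = "runU (e ` Q) (g ` G) (renV e g Q G V) x k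
           (init (e q0) (\<lambda>y. \<phi> (map (the_inv_into G g) y)))"
  let ?P = "runU Q G V x k (init q0 \<phi>)"
  show ?case
  proof (cases "Suc k \<le> length y")
    case False thus ?thesis by (simp add: Uop_def)
  next
    case True
    have yk: "y ! k \<in> G" using True Suc.prems by auto
    have inv1: "the_inv_into Q e (e q1) = q1" if "q1 \<in> Q" for q1
      using e that by (rule the_inv_into_f_f)
    have inv2: "the_inv_into G g (g t) = t" if "t \<in> G" for t
      using g that by (rule the_inv_into_f_f)
    have "runU (e ` Q) (g ` G) (renV e g Q G V) x (Suc k)
           (init (e q0) (\<lambda>y. \<phi> (map (the_inv_into G g) y))) (e q, map g y)
        = (\<Sum>(q1, \<tau>)\<in>e ` Q \<times> g ` G. ?W3 (e q, map g y ! k) (q1, \<tau>) * ?P3 (q1, (map g y)[k := \<tau>]))"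
      using True Suc.prems by (simp add: Uop_def image_mono)
    also have "\<dots> = (\<Sum>(q1, \<tau>)\<in>Q \<times> G. ?W3 (e q, map g y ! k) (e q1, g \<tau>) * ?P3 (e q1, (map g y)[k := g \<tau>]))"
      by (subst sum_prod_reindex[OF e g]) (simp add: case_prod_beta')
    also have "\<dots> = (\<Sum>(q1, \<tau>)\<in>Q \<times> G. V (x ! k) (Suc k) (q, y ! k) (q1, \<tau>) * ?P (q1, y[k := \<tau>]))"
    proof (rule sum.cong[OF refl], clarify)
      fix q1 \<tau> assume h: "q1 \<in> Q" "\<tau> \<in> G"
      have "set (y[k := \<tau>]) \<subseteq> G" using Suc.prems(2) h(2) by (meson insert_subset order_trans set_update_subset_insert)
      hence "?P3 (e q1, map g (y[k := \<tau>])) = ?P (q1, y[k := \<tau>])" using Suc.IH h(1) by blast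
      thus "?W3 (e q, map g y ! k) (e q1, g \<tau>) * ?P3 (e q1, (map g y)[k := g \<tau>]) =
            V (x ! k) (Suc k) (q, y ! k) (q1, \<tau>) * ?P (q1, y[k := \<tau>])"
        using True h yk Suc.prems by (simp add: renV_def inv1 inv2 map_update)
    qed
    also have "\<dots> = runU Q G V x (Suc k) (init q0 \<phi>) (q, y)"
      using True Suc.prems by (simp add: Uop_def)
    finally show ?thesis .
  qed
qed

lemma ren_rqfa:
  assumes rq: "is_rqfa \<Sigma> Q q0 Qa Qr G V" and e: "inj_on e Q" and g: "inj_on g G"
  shows "is_rqfa \<Sigma> (e ` Q) (e q0) (e ` Qa) (e ` Qr) (g ` G) (renV e g Q G V)"
proof -
  have inv1: "the_inv_into Q e (e q1) = q1" if "q1 \<in> Q" for q1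
    using e that by (rule the_inv_into_f_f)
  have inv2: "the_inv_into G g (g t) = t" if "t \<in> G" for t
    using g that by (rule the_inv_into_f_f)
  have sub: "Qa \<subseteq> Q" "Qr \<subseteq> Q" using rq by (auto simp: is_rqfa_def)
  have disj: "e ` Qa \<inter> e ` Qr = {}"
  proof -
    have "e ` Qa \<inter> e ` Qr = e ` (Qa \<inter> Qr)"
      using inj_on_image_Int[OF e sub] by simp
    thus ?thesis using rq by (simp add: is_rqfa_def)
  qed
  have un: "unitary_on (e ` Q \<times> g ` G) (renV e g Q G V \<sigma> i)" if "\<sigma> \<in> \<Sigma>" "i \<ge> 1" for \<sigma> i
  proof -
    have U: "unitary_on (Q \<times> G) (V \<sigma> i)" using rq that by (auto simp: is_rqfa_def)
    show ?thesis unfolding unitary_on_def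
    proof (intro ballI)
      fix a b assume a: "a \<in> e ` Q \<times> g ` G" and b: "b \<in> e ` Q \<times> g ` G"
      obtain qa ta where A: "a = (e qa, g ta)" "qa \<in> Q" "ta \<in> G" using a by auto
      obtain qb tb where B: "b = (e qb, g tb)" "qb \<in> Q" "tb \<in> G" using b by auto
      have "(\<Sum>k\<in>e ` Q \<times> g ` G. cnj (renV e g Q G V \<sigma> i k a) * renV e g Q G V \<sigma> i k b)
          = (\<Sum>(q, \<tau>)\<in>Q \<times> G. cnj (V \<sigma> i (q, \<tau>) (qa, ta)) * V \<sigma> i (q, \<tau>) (qb, tb))"
        by (subst sum_prod_reindex[OF e g]) (auto simp: renV_def inv1 inv2 A B intro!: sum.cong)
      also have "\<dots> = (if (qa, ta) = (qb, tb) then 1 else 0)"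
        using U A B unfolding unitary_on_def by (simp add: case_prod_beta')
      also have "\<dots> = (if a = b then 1 else 0)"
        using A B e g by (auto dest: inj_onD)
      finally show "(\<Sum>k\<in>e ` Q \<times> g ` G. cnj (renV e g Q G V \<sigma> i k a) * renV e g Q G V \<sigma> i k b)
          = (if a = b then 1 else 0)" .
    qed
  qed
  show ?thesis using rq sub disj un by (auto simp: is_rqfa_def)
qed

lemma sum_words_reindex:
  assumes g: "inj_on g G"
  shows "(\<Sum>y\<in>words (g ` G) n. F y) = (\<Sum>y\<in>words G n. F (map g y))"
  by (simp add: words_image[OF g] sum.reindex[OF inj_on_map_words[OF g]])

lemma ren_adv:
  assumes adv: "is_advice G \<phi>" and g: "inj_on g G"
  shows "is_advice (g ` G) (\<lambda>n y. \<phi> n (map (the_inv_into G g) y))"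
proof -
  have "map (the_inv_into G g) (map g y) = y" if "y \<in> words G n" for y n
    using that g by (simp add: words_def map_idI subset_iff the_inv_into_f_f)
  thus ?thesis using adv unfolding is_advice_def
    by (simp add: sum_words_reindex[OF g])
qed

lemma ren_acc:
  assumes e: "inj_on e Q" and g: "inj_on g G" and q0: "q0 \<in> Q" and Qa: "Qa \<subseteq> Q"
  shows "p_acc_mo (e ` Q) (e q0) (e ` Qa) (g ` G) (renV e g Q G V) x
            (\<lambda>n y. \<phi> n (map (the_inv_into G g) y)) = p_acc_mo Q q0 Qa G V x \<phi>"
proof -
  have mem: "(e q \<in> e ` Qa) = (q \<in> Qa)" if "q \<in> Q" for q
    using that e Qa by (meson inj_on_image_mem_iff)
  show ?thesis
    unfolding p_acc_mo_def Let_def sqnorm_def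
    apply (simp add: sum.reindex[OF e] sum_words_reindex[OF g])
    apply (rule sum.cong[OF refl])
    apply (rule sum.cong[OF refl])
    apply (simp add: proj_def mem ren_run[OF e g _ _ q0] words_def)
    done
qed

section \<open>The measure-once simulator\<close>

definition piM :: "'s set \<Rightarrow> ('s \<times> bool) \<times> ('g \<times> bool) \<Rightarrow> ('s \<times> bool) \<times> ('g \<times> bool)" where
  "piM H = (\<lambda>((q, f), (\<tau>, b)). if q \<in> H \<and> f = b then ((q, \<not> f), (\<tau>, \<not> b)) else ((q, f), (\<tau>, b)))"

definition WM :: "('s \<times> 'g \<Rightarrow> 's \<times> 'g \<Rightarrow> complex)
   \<Rightarrow> ('s \<times> bool) \<times> ('g \<times> bool) \<Rightarrow> ('s \<times> bool) \<times> ('g \<times> bool) \<Rightarrow> complex" where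
  "WM W = (\<lambda>((q', f'), (\<tau>', b')) ((q, f), (\<tau>, b)).
     if f = f' \<and> b = b' then (if f then (if q = q' \<and> \<tau> = \<tau>' then 1 else 0) else W (q', \<tau>') (q, \<tau>)) else 0)"

definition V2 :: "'s set \<Rightarrow> ('a \<Rightarrow> nat \<Rightarrow> ('s \<times> 'g) \<Rightarrow> ('s \<times> 'g) \<Rightarrow> complex)
   \<Rightarrow> 'a \<Rightarrow> nat \<Rightarrow> ('s \<times> bool) \<times> ('g \<times> bool) \<Rightarrow> ('s \<times> bool) \<times> ('g \<times> bool) \<Rightarrow> complex" where
  "V2 H V = (\<lambda>\<sigma> i out inp. WM (V \<sigma> i) (piM H out) inp)"

definition phi2 :: "(nat \<Rightarrow> 'g list \<Rightarrow> complex) \<Rightarrow> nat \<Rightarrow> ('g \<times> bool) list \<Rightarrow> complex" where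
  "phi2 \<phi> = (\<lambda>n y. if map snd y = replicate n False then \<phi> n (map fst y) else 0)"

lemma slice:
  fixes f0 b0 :: bool and Q :: "'s set" and G :: "'g set"
  assumes fin: "finite Q" "finite G"
    and z: "\<And>q f \<tau> b. f \<noteq> f0 \<or> b \<noteq> b0 \<Longrightarrow> F ((q, f), (\<tau>, b)) = 0"
  shows "(\<Sum>k\<in>(Q \<times> UNIV) \<times> (G \<times> UNIV). F k) = (\<Sum>(q, \<tau>)\<in>Q \<times> G. F ((q, f0), (\<tau>, b0)))"
proof -
  let ?h = "\<lambda>(q::'s, \<tau>::'g). ((q, f0), (\<tau>, b0))"
  let ?B = "(Q \<times> (UNIV::bool set)) \<times> (G \<times> (UNIV::bool set))"
  have S: "?h ` (Q \<times> G) \<subseteq> ?B" by auto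
  have "(\<Sum>k\<in>?B. F k) = (\<Sum>k\<in>?h ` (Q \<times> G). F k)"
  proof (rule sum.mono_neutral_right[OF _ S])
    show "finite ?B" using fin by simp
    show "\<forall>k\<in>?B - ?h ` (Q \<times> G). F k = 0"
    proof
      fix k assume k: "k \<in> ?B - ?h ` (Q \<times> G)"
      obtain q f \<tau> b where kk: "k = ((q, f), (\<tau>, b))" by (metis prod.collapse)
      have "f \<noteq> f0 \<or> b \<noteq> b0" using k kk by force
      thus "F k = 0" using z kk by simp
    qed
  qed
  also have "\<dots> = (\<Sum>(q, \<tau>)\<in>Q \<times> G. F ((q, f0), (\<tau>, b0)))"
    by (subst sum.reindex) (auto simp: inj_on_def case_prod_beta' comp_def)
  finally show ?thesis .
qed

lemma delta_sum:
  assumes "finite Q" "finite G"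
  shows "(\<Sum>(q, \<tau>)\<in>Q \<times> G. (if q = q1 \<and> \<tau> = t1 then c else 0)) = (if q1 \<in> Q \<and> t1 \<in> G then c else (0::complex))"
proof -
  have "(\<Sum>(q, \<tau>)\<in>Q \<times> G. (if q = q1 \<and> \<tau> = t1 then c else 0)) = (\<Sum>k\<in>Q \<times> G. (if (q1, t1) = k then c else 0))"
    by (intro sum.cong refl) (auto simp: case_prod_beta' prod_eq_iff)
  also have "\<dots> = (if (q1, t1) \<in> Q \<times> G then c else 0)" using assms by (simp add: sum.delta)
  finally show ?thesis by simp
qed

lemma W_sum:
  assumes fin: "finite Q" "finite G"
  shows "(\<Sum>k\<in>(Q \<times> UNIV) \<times> (G \<times> UNIV). WM W ((q1, f1), (t1, b1)) k * F k) =
     (if f1 then (if q1 \<in> Q \<and> t1 \<in> G then F ((q1, True), (t1, b1)) else 0)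
      else (\<Sum>(q, \<tau>)\<in>Q \<times> G. W (q1, t1) (q, \<tau>) * F ((q, False), (\<tau>, b1))))"
proof -
  have "(\<Sum>k\<in>(Q \<times> UNIV) \<times> (G \<times> UNIV). WM W ((q1, f1), (t1, b1)) k * F k) =
        (\<Sum>(q, \<tau>)\<in>Q \<times> G. WM W ((q1, f1), (t1, b1)) ((q, f1), (\<tau>, b1)) * F ((q, f1), (\<tau>, b1)))"
    by (rule slice[OF fin]) (auto simp: WM_def)
  also have "\<dots> = (if f1 then (if q1 \<in> Q \<and> t1 \<in> G then F ((q1, True), (t1, b1)) else 0)
      else (\<Sum>(q, \<tau>)\<in>Q \<times> G. W (q1, t1) (q, \<tau>) * F ((q, False), (\<tau>, b1))))"
  proof (cases f1)
    case True
    have "(\<Sum>(q, \<tau>)\<in>Q \<times> G. WM W ((q1, f1), (t1, b1)) ((q, f1), (\<tau>, b1)) * F ((q, f1), (\<tau>, b1)))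
       = (\<Sum>(q, \<tau>)\<in>Q \<times> G. (if q = q1 \<and> \<tau> = t1 then F ((q1, True), (t1, b1)) else 0))"
      using True by (intro sum.cong) (auto simp: WM_def)
    thus ?thesis using True delta_sum[OF fin] by simp
  next
    case False
    thus ?thesis by (auto simp: WM_def intro!: sum.cong)
  qed
  finally show ?thesis .
qed

lemma piM_inv: "piM H (piM H k) = k"
  by (cases k) (auto simp: piM_def)

lemma piM_bij: "bij_betw (piM H) ((Q \<times> UNIV) \<times> (G \<times> UNIV)) ((Q \<times> UNIV) \<times> (G \<times> UNIV))"
  by (rule bij_betw_byWitness[where f' = "piM H"]) (auto simp: piM_inv piM_def split: if_splits)

lemma WM_unitary:
  assumes fin: "finite Q" "finite G" and U: "unitary_on (Q \<times> G) W"
  shows "unitary_on ((Q \<times> UNIV) \<times> (G \<times> UNIV)) (WM W)"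
  unfolding unitary_on_def
proof (intro ballI)
  fix a b assume a: "a \<in> (Q \<times> (UNIV::bool set)) \<times> (G \<times> (UNIV::bool set))"
    and b: "b \<in> (Q \<times> (UNIV::bool set)) \<times> (G \<times> (UNIV::bool set))"
  obtain qa fa ta ba where A: "a = ((qa, fa), (ta, ba))" "qa \<in> Q" "ta \<in> G" using a by auto
  obtain qb fb tb bb where B: "b = ((qb, fb), (tb, bb))" "qb \<in> Q" "tb \<in> G" using b by auto
  have "(\<Sum>k\<in>(Q \<times> UNIV) \<times> (G \<times> UNIV). cnj (WM W k a) * WM W k b)
      = (\<Sum>(q, \<tau>)\<in>Q \<times> G. cnj (WM W ((q, fa), (\<tau>, ba)) a) * WM W ((q, fa), (\<tau>, ba)) b)"
    by (rule slice[OF fin]) (auto simp: WM_def A)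
  also have "\<dots> = (if a = b then 1 else 0)"
  proof (cases "fa = fb \<and> ba = bb")
    case False
    hence "a \<noteq> b" using A B by auto
    thus ?thesis using False by (auto simp: WM_def A B intro!: sum.neutral)
  next
    case eq: True
    show ?thesis
    proof (cases fa)
      case True
      have "(\<Sum>(q, \<tau>)\<in>Q \<times> G. cnj (WM W ((q, fa), (\<tau>, ba)) a) * WM W ((q, fa), (\<tau>, ba)) b)
         = (\<Sum>(q, \<tau>)\<in>Q \<times> G. (if q = qa \<and> \<tau> = ta then (if qa = qb \<and> ta = tb then 1 else 0) else 0))"
        using True eq by (intro sum.cong refl) (auto simp: WM_def A B)
      also have "\<dots> = (if a = b then 1 else 0)"
        using delta_sum[OF fin] A B eq by simp
      finally show ?thesis .
    next
      case False
      have "(\<Sum>(q, \<tau>)\<in>Q \<times> G. cnj (WM W ((q, fa), (\<tau>, ba)) a) * WM W ((q, fa), (\<tau>, ba)) b)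
         = (\<Sum>k\<in>Q \<times> G. cnj (W k (qa, ta)) * W k (qb, tb))"
        using False eq by (intro sum.cong refl) (auto simp: WM_def A B)
      also have "\<dots> = (if a = b then 1 else 0)"
        using U A B eq unfolding unitary_on_def by auto
      finally show ?thesis .
    qed
  qed
  finally show "(\<Sum>k\<in>(Q \<times> UNIV) \<times> (G \<times> UNIV). cnj (WM W k a) * WM W k b) = (if a = b then 1 else 0)" .
qed

lemma V2_unitary:
  assumes fin: "finite Q" "finite G" and U: "unitary_on (Q \<times> G) (V \<sigma> i)"
  shows "unitary_on ((Q \<times> UNIV) \<times> (G \<times> UNIV)) (V2 H V \<sigma> i)"
  unfolding unitary_on_def
proof (intro ballI)
  fix a b assume a: "a \<in> (Q \<times> (UNIV::bool set)) \<times> (G \<times> (UNIV::bool set))"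
    and b: "b \<in> (Q \<times> (UNIV::bool set)) \<times> (G \<times> (UNIV::bool set))"
  have "(\<Sum>k\<in>(Q \<times> UNIV) \<times> (G \<times> UNIV). cnj (V2 H V \<sigma> i k a) * V2 H V \<sigma> i k b)
     = (\<Sum>k\<in>(Q \<times> UNIV) \<times> (G \<times> UNIV). cnj (WM (V \<sigma> i) k a) * WM (V \<sigma> i) k b)"
    unfolding V2_def
    by (rule sum.reindex_bij_betw[OF piM_bij, where g = "\<lambda>k. cnj (WM (V \<sigma> i) k a) * WM (V \<sigma> i) k b"])
  also have "\<dots> = (if a = b then 1 else 0)"
    using WM_unitary[OF fin U] a b unfolding unitary_on_def by blast
  finally show "(\<Sum>k\<in>(Q \<times> UNIV) \<times> (G \<times> UNIV). cnj (V2 H V \<sigma> i k a) * V2 H V \<sigma> i k b) = (if a = b then 1 else 0)" .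
qed

lemma ind_nth_k:
  assumes "k < n" "i \<in> {1..k}"
  shows "((replicate n False)[i - 1 := True]) ! k = False"
  using assms by (auto simp: nth_list_update)

lemma ind_iff:
  assumes "length bs = n" "k < n" "bs ! k = True"
  shows "(bs = (replicate n False)[k := True]) = (bs[k := False] = replicate n False)"
proof
  assume "bs = (replicate n False)[k := True]"
  thus "bs[k := False] = replicate n False" using assms
    by (metis list_update_id nth_replicate list_update_overwrite)
next
  assume h: "bs[k := False] = replicate n False"
  have "bs = (bs[k := False])[k := True]" using assms by (metis list_update_id list_update_overwrite)
  thus "bs = (replicate n False)[k := True]" using h by simp
qed

lemma invariant:
  fixes Q :: "'s set" and G :: "'g set" and V :: "'a \<Rightarrow> nat \<Rightarrow> ('s \<times> 'g) \<Rightarrow> ('s \<times> 'g) \<Rightarrow> complex"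
  assumes fin: "finite Q" "finite G" and len: "length x = n"
  shows "k \<le> n \<Longrightarrow> q \<in> Q \<Longrightarrow> set y \<subseteq> G \<times> UNIV \<Longrightarrow> length y = n \<Longrightarrow>
   runU (Q \<times> UNIV) (G \<times> UNIV) (V2 (Qa \<union> Qr) V) x k (init (q0, False) (phi2 \<phi> n)) ((q, f), y) =
   (if f then (if q \<in> Qa \<union> Qr then (\<Sum>i\<in>{1..k}. if map snd y = (replicate n False)[i - 1 := True]
        then Uop Q G (V (x ! (i - 1)) i) i (runT Q (Q - Qa - Qr) G V x (i - 1) (init q0 (\<phi> n))) (q, map fst y)
        else 0) else 0)
    else (if map snd y = replicate n False then runT Q (Q - Qa - Qr) G V x k (init q0 (\<phi> n)) (q, map fst y) else 0))"
proof (induction k arbitrary: q f y)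
  case 0
  then show ?case by (auto simp: init_def phi2_def)
next
  case (Suc k)
  define H where "H = Qa \<union> Qr"
  define Qn where "Qn = Q - Qa - Qr"
  define Psi where "Psi = runU (Q \<times> UNIV) (G \<times> UNIV) (V2 (Qa \<union> Qr) V) x k (init (q0, False) (phi2 \<phi> n))"
  define R where "R = (\<lambda>j. runT Q (Q - Qa - Qr) G V x j (init q0 (\<phi> n)))"
  define A where "A = (\<lambda>i. Uop Q G (V (x ! (i - 1)) i) i (R (i - 1)))"
  define ind where "ind = (\<lambda>i. (replicate n False)[i - 1 := True])"
  define bs where "bs = map snd y"
  define yt where "yt = map fst y"
  have kn: "k < n" using Suc.prems by simp
  obtain t' b' where yk: "y ! k = (t', b')" by (metis prod.collapse)
  have t'G: "t' \<in> G" using Suc.prems kn yk by (metis mem_Sigma_iff nth_mem subsetD)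
  have bsk: "bs ! k = b'" using yk kn Suc.prems by (simp add: bs_def)
  have ytk: "yt ! k = t'" using yk kn Suc.prems by (simp add: yt_def)
  have lbs: "length bs = n" "length yt = n" using Suc.prems by (auto simp: bs_def yt_def)
  have ytG: "set yt \<subseteq> G" using Suc.prems by (auto simp: yt_def)
  define Sm where "Sm = (\<Sum>(q1, t)\<in>Q \<times> G. V (x ! k) (Suc k) (q, t') (q1, t) * R k (q1, yt[k := t]))"
  have IHF: "Psi ((q1, False), y[k := (t, b)]) = (if bs[k := b] = replicate n False then R k (q1, yt[k := t]) else 0)"
    if "q1 \<in> Q" "t \<in> G" for q1 t b
  proof -
    have "set (y[k := (t, b)]) \<subseteq> G \<times> UNIV" using Suc.prems that
      by (meson UNIV_I insert_subset mem_Sigma_iff order_trans set_update_subset_insert)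
    thus ?thesis using Suc.IH[of q1 "y[k := (t, b)]" False] Suc.prems that
      by (simp add: Psi_def R_def bs_def yt_def map_update)
  qed
  have IHT: "Psi ((q, True), y[k := (t', b)]) = (if q \<in> H then (\<Sum>i\<in>{1..k}. if bs[k := b] = ind i then A i (q, yt) else 0) else 0)"
    for b
  proof -
    have st: "set (y[k := (t', b)]) \<subseteq> G \<times> UNIV" using Suc.prems t'G
      by (meson UNIV_I insert_subset mem_Sigma_iff order_trans set_update_subset_insert)
    have mfst: "map fst (y[k := (t', b)]) = yt" using ytk unfolding yt_def
      by (metis list_update_id map_update fst_conv)
    have msnd: "map snd (y[k := (t', b)]) = bs[k := b]" unfolding bs_def
      by (simp add: map_update)
    have ln: "length (y[k := (t', b)]) = n" using Suc.prems by simp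
    have kle: "k \<le> n" using kn by simp
    note IH' = Suc.IH[of q "y[k := (t', b)]" True, OF kle Suc.prems(2) st ln, unfolded mfst msnd]
    show ?thesis unfolding Psi_def A_def R_def H_def ind_def using IH' by simp
  qed
  have SF: "(\<Sum>(q1, t)\<in>Q \<times> G. V (x ! k) (Suc k) (q, t') (q1, t) * Psi ((q1, False), y[k := (t, b)]))
      = (if bs[k := b] = replicate n False then Sm else 0)" for b
  proof -
    have "(\<Sum>(q1, t)\<in>Q \<times> G. V (x ! k) (Suc k) (q, t') (q1, t) * Psi ((q1, False), y[k := (t, b)]))
      = (\<Sum>(q1, t)\<in>Q \<times> G. V (x ! k) (Suc k) (q, t') (q1, t) *
           (if bs[k := b] = replicate n False then R k (q1, yt[k := t]) else 0))"
      by (intro sum.cong refl) (auto simp: IHF)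
    thus ?thesis by (cases "bs[k := b] = replicate n False") (simp_all add: Sm_def)
  qed
  define f'' where "f'' = (if q \<in> H \<and> f = b' then \<not> f else f)"
  define b'' where "b'' = (if q \<in> H \<and> f = b' then \<not> b' else b')"
  have step: "runU (Q \<times> UNIV) (G \<times> UNIV) (V2 (Qa \<union> Qr) V) x (Suc k) (init (q0, False) (phi2 \<phi> n)) ((q, f), y)
     = (if f'' then Psi ((q, True), y[k := (t', b'')])
        else (\<Sum>(q1, t)\<in>Q \<times> G. V (x ! k) (Suc k) (q, t') (q1, t) * Psi ((q1, False), y[k := (t, b'')])))"
  proof -
    have pi: "piM H ((q, f), y ! k) = ((q, f''), (t', b''))"
      by (simp add: piM_def yk f''_def b''_def)
    have "runU (Q \<times> UNIV) (G \<times> UNIV) (V2 (Qa \<union> Qr) V) x (Suc k) (init (q0, False) (phi2 \<phi> n)) ((q, f), y)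
       = (\<Sum>kk\<in>(Q \<times> UNIV) \<times> (G \<times> UNIV). WM (V (x ! k) (Suc k)) ((q, f''), (t', b'')) kk * Psi (fst kk, y[k := snd kk]))"
      using Suc.prems kn pi[symmetric]
      by (simp add: Uop_def Psi_def V2_def H_def case_prod_beta')
    also have "\<dots> = (if f'' then Psi ((q, True), y[k := (t', b'')])
        else (\<Sum>(q1, t)\<in>Q \<times> G. V (x ! k) (Suc k) (q, t') (q1, t) * Psi ((q1, False), y[k := (t, b'')])))"
      using W_sum[OF fin, of "V (x ! k) (Suc k)" q f'' t' b'' "\<lambda>kk. Psi (fst kk, y[k := snd kk])"] t'G Suc.prems
      by simp
    finally show ?thesis .
  qed
  have Rs: "R (Suc k) (q, yt) = (if q \<in> Qn then Sm else 0)"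
    using Suc.prems ytG lbs kn ytk by (simp add: R_def Qn_def Sm_def Uop_def proj_def)
  have As: "A (Suc k) (q, yt) = Sm"
    using Suc.prems ytG lbs kn ytk by (simp add: A_def R_def Sm_def Uop_def)
  have indS: "ind (Suc k) ! k = True" using kn by (simp add: ind_def)
  have indk: "ind i ! k = False" if "i \<in> {1..k}" for i
    using ind_nth_k[OF kn that] by (simp add: ind_def)
  have zero1: "(\<Sum>i\<in>{1..k}. if c = ind i then A i (q, yt) else 0) = 0" if "c ! k = True" for c
    by (rule sum.neutral) (use that indk in force)
  have qQ: "q \<in> Q" using Suc.prems by simp
  have yupd: "y[k := (t', b')] = y" using yk by (metis list_update_id)
  have bsupd: "bs[k := b'] = bs" using bsk list_update_id[of bs k] by simp
  have main: "runU (Q \<times> UNIV) (G \<times> UNIV) (V2 (Qa \<union> Qr) V) x (Suc k) (init (q0, False) (phi2 \<phi> n)) ((q, f), y)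
     = (if f then (if q \<in> H then (\<Sum>i\<in>{1..Suc k}. if bs = ind i then A i (q, yt) else 0) else 0)
        else (if bs = replicate n False then R (Suc k) (q, yt) else 0))"
  proof (cases "q \<in> H \<and> f = b'")
    case sw: True
    show ?thesis
    proof (cases f)
      case True
      hence b: "b' = True" "f'' = False" "b'' = False" using sw by (auto simp: f''_def b''_def)
      have "(bs = ind (Suc k)) = (bs[k := False] = replicate n False)"
        using ind_iff[OF lbs(1) kn] bsk b by (simp add: ind_def)
      thus ?thesis using step b SF[of False] zero1[of bs] bsk sw True As
        by (simp add: sum.cl_ivl_Suc)
    next
      case False
      hence b: "b' = False" "f'' = True" "b'' = True" using sw by (auto simp: f''_def b''_def)
      have "q \<notin> Qn" using sw by (auto simp: Qn_def H_def)
      thus ?thesis using step b IHT[of True] zero1[of "bs[k := True]"] lbs kn sw False Rs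
        by simp
    qed
  next
    case nsw: False
    hence b: "f'' = f" "b'' = b'" by (auto simp: f''_def b''_def)
    show ?thesis
    proof (cases f)
      case True
      have extra: "q \<in> H \<Longrightarrow> bs \<noteq> ind (Suc k)" using nsw True bsk indS by auto
      show ?thesis using step b True IHT[of b'] yupd bsupd extra
        by (simp add: sum.cl_ivl_Suc)
    next
      case False
      have "q \<notin> Qn \<Longrightarrow> bs \<noteq> replicate n False"
        using nsw False bsk qQ kn lbs by (auto simp: Qn_def H_def) (metis nth_replicate)+
      thus ?thesis using step b False SF[of b'] bsupd Rs by auto
    qed
  qed
  show ?case using main[unfolded Psi_def R_def A_def H_def ind_def bs_def yt_def] by simp
qed

lemma sum_bits:
  fixes G :: "'g set" and c :: "bool list" and h :: "'g list \<Rightarrow> 'b::comm_monoid_add"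
  assumes fin: "finite G" and lc: "length c = n"
  shows "(\<Sum>y\<in>words (G \<times> UNIV) n. if map snd y = c then h (map fst y) else 0) = (\<Sum>z\<in>words G n. h z)"
proof -
  have finW: "finite (words (G \<times> (UNIV::bool set)) n)" using fin by (simp add: finite_words)
  have img: "{y \<in> words (G \<times> UNIV) n. map snd y = c} = (\<lambda>z. zip z c) ` words G n"
  proof (intro set_eqI iffI)
    fix y assume "y \<in> {y \<in> words (G \<times> UNIV) n. map snd y = c}"
    hence y: "set y \<subseteq> G \<times> UNIV" "length y = n" "map snd y = c" by (auto simp: words_def)
    have "y = zip (map fst y) c" using y(3) by (metis zip_map_fst_snd)
    moreover have "map fst y \<in> words G n" using y by (auto simp: words_def)
    ultimately show "y \<in> (\<lambda>z. zip z c) ` words G n" by blast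
  next
    fix y assume "y \<in> (\<lambda>z. zip z c) ` words G n"
    then obtain z where z: "z \<in> words G n" "y = zip z c" by blast
    thus "y \<in> {y \<in> words (G \<times> UNIV) n. map snd y = c}" using lc
      by (auto simp: words_def dest: set_zip_leftD)
  qed
  have inj: "inj_on (\<lambda>z. zip z c) (words G n)"
  proof (rule inj_onI)
    fix z1 z2 assume h: "z1 \<in> words G n" "z2 \<in> words G n" "zip z1 c = zip z2 c"
    have "z1 = map fst (zip z1 c)" using h(1) lc by (simp add: words_def)
    also have "\<dots> = map fst (zip z2 c)" using h(3) by simp
    also have "\<dots> = z2" using h(2) lc by (simp add: words_def)
    finally show "z1 = z2" .
  qed
  have "(\<Sum>y\<in>words (G \<times> UNIV) n. if map snd y = c then h (map fst y) else 0)
      = (\<Sum>y\<in>{y \<in> words (G \<times> UNIV) n. map snd y = c}. h (map fst y))"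
    using sum.inter_filter[OF finW, of "\<lambda>y. h (map fst y)" "\<lambda>y. map snd y = c"] by simp
  also have "\<dots> = (\<Sum>z\<in>words G n. h (map fst (zip z c)))"
    unfolding img by (simp add: sum.reindex[OF inj])
  also have "\<dots> = (\<Sum>z\<in>words G n. h z)"
    using lc by (intro sum.cong refl) (simp add: words_def)
  finally show ?thesis .
qed

lemma adv2:
  assumes fin: "finite G" and adv: "is_advice G \<phi>"
  shows "is_advice (G \<times> UNIV) (phi2 \<phi>)"
  unfolding is_advice_def
proof (intro allI impI)
  fix n :: nat assume n: "1 \<le> n"
  have "(\<Sum>y\<in>words (G \<times> UNIV) n. (cmod (phi2 \<phi> n y))\<^sup>2)
     = (\<Sum>y\<in>words (G \<times> UNIV) n. if map snd y = replicate n False then (cmod (\<phi> n (map fst y)))\<^sup>2 else 0)"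
    by (intro sum.cong refl) (simp add: phi2_def)
  also have "\<dots> = (\<Sum>z\<in>words G n. (cmod (\<phi> n z))\<^sup>2)" by (rule sum_bits[OF fin]) simp
  also have "\<dots> = 1" using adv n by (simp add: is_advice_def)
  finally show "(\<Sum>y\<in>words (G \<times> UNIV) n. (cmod (phi2 \<phi> n y))\<^sup>2) = 1" .
qed

lemma rqfa2:
  assumes rq: "is_rqfa \<Sigma> Q q0 Qa Qr G V"
  shows "is_rqfa \<Sigma> (Q \<times> UNIV) (q0, False) (Qa \<times> {True}) (Qr \<times> {True}) (G \<times> UNIV) (V2 (Qa \<union> Qr) V)"
  using rq V2_unitary[of Q G V] by (auto simp: is_rqfa_def)

lemma sum_single_sq:
  assumes fin: "finite I" and uniq: "\<And>i j. i \<in> I \<Longrightarrow> j \<in> I \<Longrightarrow> P i \<Longrightarrow> P j \<Longrightarrow> i = j"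
  shows "(cmod (\<Sum>i\<in>I. if P i then a i else 0))\<^sup>2 = (\<Sum>i\<in>I. if P i then (cmod (a i))\<^sup>2 else 0)"
proof (cases "\<exists>i0\<in>I. P i0")
  case True
  then obtain i0 where i0: "i0 \<in> I" "P i0" by blast
  have e: "P i = (i = i0)" if "i \<in> I" for i using uniq[OF that i0(1) _ i0(2)] i0 that by blast
  have "(\<Sum>i\<in>I. if P i then a i else 0) = (\<Sum>i\<in>I. if i0 = i then a i else 0)"
    by (intro sum.cong refl) (auto simp: e)
  also have "\<dots> = a i0" using fin i0 by (simp add: sum.delta)
  finally have 1: "(\<Sum>i\<in>I. if P i then a i else 0) = a i0" .
  have "(\<Sum>i\<in>I. if P i then (cmod (a i))\<^sup>2 else 0) = (\<Sum>i\<in>I. if i0 = i then (cmod (a i))\<^sup>2 else 0)"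
    by (intro sum.cong refl) (auto simp: e)
  also have "\<dots> = (cmod (a i0))\<^sup>2" using fin i0 by (simp add: sum.delta)
  finally show ?thesis using 1 by simp
next
  case False
  thus ?thesis by (simp add: sum.neutral)
qed

lemma acc2:
  fixes Q :: "'s set" and G :: "'g set" and V :: "'a \<Rightarrow> nat \<Rightarrow> ('s \<times> 'g) \<Rightarrow> ('s \<times> 'g) \<Rightarrow> complex"
  assumes rq: "is_rqfa \<Sigma> Q q0 Qa Qr G V"
  shows "p_acc_mo (Q \<times> UNIV) (q0, False) (Qa \<times> {True}) (G \<times> UNIV) (V2 (Qa \<union> Qr) V) x (phi2 \<phi>)
       = p_acc_mm Q q0 Qa Qr G V x \<phi>"
proof -
  define n where "n = length x"
  have fin: "finite Q" "finite G" and QaQ: "Qa \<subseteq> Q" using rq by (auto simp: is_rqfa_def)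
  define Psi where "Psi = runU (Q \<times> UNIV) (G \<times> UNIV) (V2 (Qa \<union> Qr) V) x n (init (q0, False) (phi2 \<phi> n))"
  define A where "A = (\<lambda>i. Uop Q G (V (x ! (i - 1)) i) i (runT Q (Q - Qa - Qr) G V x (i - 1) (init q0 (\<phi> n))))"
  define ind where "ind = (\<lambda>i. (replicate n False)[i - 1 := True])"
  have finW: "finite (words G n)" using fin by (simp add: finite_words)
  have Psi_eq: "Psi ((q, True), y) = (\<Sum>i\<in>{1..n}. if map snd y = ind i then A i (q, map fst y) else 0)"
    if "q \<in> Qa" "y \<in> words (G \<times> UNIV) n" for q y
  proof -
    have "Psi ((q, True), y) = (if True then (if q \<in> Qa \<union> Qr then (\<Sum>i\<in>{1..n}. if map snd y = (replicate n False)[i - 1 := True] then Uop Q G (V (x ! (i - 1)) i) i (runT Q (Q - Qa - Qr) G V x (i - 1) (init q0 (\<phi> n))) (q, map fst y) else 0) else 0) else (if map snd y = replicate n False then runT Q (Q - Qa - Qr) G V x n (init q0 (\<phi> n)) (q, map fst y) else 0))"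
      unfolding Psi_def by (rule invariant[OF fin n_def[symmetric]]) (use that QaQ in \<open>auto simp: words_def\<close>)
    then show ?thesis using that unfolding A_def ind_def by simp
  qed
  have induniq: "i = j" if "i \<in> {1..n}" "j \<in> {1..n}" "c = ind i" "c = ind j" for i j c
  proof -
    have "ind i ! (i - 1) = True" using that by (auto simp: ind_def nth_list_update)
    hence jt: "ind j ! (i - 1) = True" using that by simp
    have "i - 1 = j - 1"
    proof (rule ccontr)
      assume ne: "i - 1 \<noteq> j - 1"
      have lt: "i - 1 < n" using that(1) by auto
      have "ind j ! (i - 1) = False" using that(2) ne lt by (simp add: ind_def nth_list_update)
      thus False using jt by simp
    qed
    thus ?thesis using that(1,2) by (simp, linarith)
  qed
  have "p_acc_mo (Q \<times> UNIV) (q0, False) (Qa \<times> {True}) (G \<times> UNIV) (V2 (Qa \<union> Qr) V) x (phi2 \<phi>)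
      = (\<Sum>qf\<in>Q \<times> UNIV. \<Sum>y\<in>words (G \<times> UNIV) n. (cmod (proj (Qa \<times> {True}) Psi (qf, y)))\<^sup>2)"
    by (simp add: p_acc_mo_def sqnorm_def Psi_def n_def Let_def)
  also have "\<dots> = (\<Sum>qf\<in>Qa \<times> {True}. \<Sum>y\<in>words (G \<times> UNIV) n. (cmod (proj (Qa \<times> {True}) Psi (qf, y)))\<^sup>2)"
    using fin QaQ by (intro sum.mono_neutral_right) (auto simp: proj_def)
  also have "\<dots> = (\<Sum>q\<in>Qa. \<Sum>y\<in>words (G \<times> UNIV) n. (cmod (Psi ((q, True), y)))\<^sup>2)"
  proof -
    have "Qa \<times> {True} = (\<lambda>q. (q, True)) ` Qa" by auto
    thus ?thesis by (simp add: sum.reindex inj_on_def proj_def)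
  qed
  also have "\<dots> = (\<Sum>q\<in>Qa. \<Sum>i\<in>{1..n}. \<Sum>z\<in>words G n. (cmod (A i (q, z)))\<^sup>2)"
  proof (rule sum.cong[OF refl])
    fix q assume q: "q \<in> Qa"
    have "(\<Sum>y\<in>words (G \<times> UNIV) n. (cmod (Psi ((q, True), y)))\<^sup>2)
       = (\<Sum>y\<in>words (G \<times> UNIV) n. \<Sum>i\<in>{1..n}. if map snd y = ind i then (cmod (A i (q, map fst y)))\<^sup>2 else 0)"
    proof (intro sum.cong refl)
      fix y assume y: "y \<in> words (G \<times> (UNIV::bool set)) n"
      show "(cmod (Psi ((q, True), y)))\<^sup>2 = (\<Sum>i\<in>{1..n}. if map snd y = ind i then (cmod (A i (q, map fst y)))\<^sup>2 else 0)"
        unfolding Psi_eq[OF q y] by (rule sum_single_sq) (auto intro: induniq)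
    qed
    also have "\<dots> = (\<Sum>i\<in>{1..n}. \<Sum>y\<in>words (G \<times> UNIV) n. if map snd y = ind i then (cmod (A i (q, map fst y)))\<^sup>2 else 0)"
      by (rule sum.swap)
    also have "\<dots> = (\<Sum>i\<in>{1..n}. \<Sum>z\<in>words G n. (cmod (A i (q, z)))\<^sup>2)"
      by (intro sum.cong refl sum_bits[OF fin(2)]) (simp add: ind_def)
    finally show "(\<Sum>y\<in>words (G \<times> UNIV) n. (cmod (Psi ((q, True), y)))\<^sup>2)
       = (\<Sum>i\<in>{1..n}. \<Sum>z\<in>words G n. (cmod (A i (q, z)))\<^sup>2)" .
  qed
  also have "\<dots> = (\<Sum>i\<in>{1..n}. \<Sum>q\<in>Qa. \<Sum>z\<in>words G n. (cmod (A i (q, z)))\<^sup>2)"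
    by (rule sum.swap)
  also have "\<dots> = (\<Sum>i\<in>{1..n}. sqnorm Q G n (proj Qa (A i)))"
  proof (rule sum.cong[OF refl])
    fix i
    have "sqnorm Q G n (proj Qa (A i)) = (\<Sum>q\<in>Q. \<Sum>z\<in>words G n. (cmod (proj Qa (A i) (q, z)))\<^sup>2)"
      by (simp add: sqnorm_def)
    also have "\<dots> = (\<Sum>q\<in>Qa. \<Sum>z\<in>words G n. (cmod (proj Qa (A i) (q, z)))\<^sup>2)"
      using fin QaQ by (intro sum.mono_neutral_right) (auto simp: proj_def)
    also have "\<dots> = (\<Sum>q\<in>Qa. \<Sum>z\<in>words G n. (cmod (A i (q, z)))\<^sup>2)"
      by (simp add: proj_def)
    finally show "(\<Sum>q\<in>Qa. \<Sum>z\<in>words G n. (cmod (A i (q, z)))\<^sup>2) = sqnorm Q G n (proj Qa (A i))" by simp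
  qed
  also have "\<dots> = p_acc_mm Q q0 Qa Qr G V x \<phi>"
    by (simp add: p_acc_mm_def A_def n_def Let_def)
  finally show ?thesis .
qed

theorem lemma5p7:
  fixes \<Sigma> :: "'a set" and Q :: "'s set" and q0 :: 's and Qa Qr :: "'s set"
    and \<Gamma> :: "'g set" and V :: "'a \<Rightarrow> nat \<Rightarrow> ('s \<times> 'g) \<Rightarrow> ('s \<times> 'g) \<Rightarrow> complex"
    and \<phi> :: "nat \<Rightarrow> 'g list \<Rightarrow> complex"
  assumes "is_rqfa \<Sigma> Q q0 Qa Qr \<Gamma> V"
    and "is_advice \<Gamma> \<phi>"
  shows "\<exists>(Q' :: nat set) q0' Qa' Qr' (\<Gamma>' :: nat set)
            (V' :: 'a \<Rightarrow> nat \<Rightarrow> (nat \<times> nat) \<Rightarrow> (nat \<times> nat) \<Rightarrow> complex)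
            (\<phi>' :: nat \<Rightarrow> nat list \<Rightarrow> complex).
           is_rqfa \<Sigma> Q' q0' Qa' Qr' \<Gamma>' V' \<and> is_advice \<Gamma>' \<phi>' \<and>
           (\<forall>x. set x \<subseteq> \<Sigma> \<and> x \<noteq> [] \<longrightarrow>
              p_acc_mo Q' q0' Qa' \<Gamma>' V' x \<phi>' = p_acc_mm Q q0 Qa Qr \<Gamma> V x \<phi>)"
proof -
  note rq = assms(1) and adv = assms(2)
  have fin: "finite Q" "finite \<Gamma>" and q0: "q0 \<in> Q" and QaQ: "Qa \<subseteq> Q"
    using rq by (auto simp: is_rqfa_def)
  obtain e :: "'s \<times> bool \<Rightarrow> nat" where e: "inj_on e (Q \<times> UNIV)"
    using finite_imp_inj_to_nat_seg[of "Q \<times> (UNIV::bool set)"] fin by auto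
  obtain g :: "'g \<times> bool \<Rightarrow> nat" where g: "inj_on g (\<Gamma> \<times> UNIV)"
    using finite_imp_inj_to_nat_seg[of "\<Gamma> \<times> (UNIV::bool set)"] fin by auto
  have q02: "(q0, False) \<in> Q \<times> UNIV" using q0 by simp
  have Qa2: "Qa \<times> {True} \<subseteq> Q \<times> UNIV" using QaQ by auto
  have R: "is_rqfa \<Sigma> (e ` (Q \<times> UNIV)) (e (q0, False)) (e ` (Qa \<times> {True})) (e ` (Qr \<times> {True}))
      (g ` (\<Gamma> \<times> UNIV)) (renV e g (Q \<times> UNIV) (\<Gamma> \<times> UNIV) (V2 (Qa \<union> Qr) V))"
    by (rule ren_rqfa[OF rqfa2[OF rq] e g])
  have A: "is_advice (g ` (\<Gamma> \<times> UNIV)) (\<lambda>n y. phi2 \<phi> n (map (the_inv_into (\<Gamma> \<times> UNIV) g) y))"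
    by (rule ren_adv[OF adv2[OF fin(2) adv] g])
  have P: "p_acc_mo (e ` (Q \<times> UNIV)) (e (q0, False)) (e ` (Qa \<times> {True})) (g ` (\<Gamma> \<times> UNIV))
      (renV e g (Q \<times> UNIV) (\<Gamma> \<times> UNIV) (V2 (Qa \<union> Qr) V)) x
      (\<lambda>n y. phi2 \<phi> n (map (the_inv_into (\<Gamma> \<times> UNIV) g) y)) = p_acc_mm Q q0 Qa Qr \<Gamma> V x \<phi>" for x
    using ren_acc[OF e g q02 Qa2, of "V2 (Qa \<union> Qr) V" x "phi2 \<phi>"] acc2[OF rq, of x \<phi>] by simp
  show ?thesis using R A P by blast
qed

end
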